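(* In the setting described in the context, assume $G$ satisfies Condition 1. Then $$\sum_{t=0}^{\infty}\alpha(t)\sum_{j=1}^{n-\phi}\pi_j(t+1)\,|y(t)-x_j(t)|<\infty.$$
   Context: A synchronous system of $n$ agents communicates over a directed graph $G=(\mathcal{V},\mathcal{E})$, $\mathcal{V}=\{1,\dots,n\}$, without self-loops; $N_i^-=\{j:(j,i)\in\mathcal{E}\}$. At most $f$ agents are Byzantine faulty (may send arbitrary, possibly inconsistent values); $\mathcal{F}$ is the set of faulty agents, $\phi=|\mathcal{F}|\le f$, non-faulty agents indexed $1,\dots,n-\phi$. Assignment matrix $\mathbf{A}\in\mathbb{R}^{k\times n}$: nonnegative entries, columns summing to $1$; agent $i$ holds $g_i=\sum_{j=1}^k\mathbf{A}_{ji}h_j$ for admissible (convex, $L$-Lipschitz, nonempty compact argmin) $h_1,\dots,h_k:\mathbb{R}\to\mathbb{R}$. Sparsity parameter $sp(\mathbf{A})$: smallest $s$ such that the sum of any $s$ columns of $\mathbf{A}$ is component-wise positive ($n+1$ if the sum of all columns is not). Reduced graph w.r.t. $\mathcal{F}$: subgraph of $G$ obtained by removing the nodes of $\mathcal{F}$ with their edges and then up to $f$ additional incoming edges at each remaining node; $R_{\mathcal{F}}$ the set of reduced graphs, $\tau=|R_{\mathcal{F}}|$. Source component: set of nodes each having a directed path to every other node of the graph. Condition 1: for every $\mathcal{F}'\subseteq\mathcal{V}$ with $|\mathcal{F}'|\le f$, every reduced graph w.r.t. $\mathcal{F}'$ has a source component with at least $\max\{f+1,sp(\mathbf{A})\}$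 nodes. Step sizes: $\alpha(t)\ge0$ with $\alpha(t+1)\le\alpha(t)$, $\sum_t\alpha(t)=\infty$, $\sum_t\alpha^2(t)<\infty$. Algorithm 2: arbitrary $x_i(0)$; in iteration $t\ge1$ non-faulty agent $i$ sends $x_i(t-1)$ to all out-neighbors, receives $|N_i^-|$ values (default for missing), discards the $f$ smallest and $f$ largest, lets $N_i^*(t)$ be the senders of the remaining values with values $w_j$, sets $w_i=x_i(t-1)$, and updates $x_i(t)=\frac{1}{|N_i^*(t)|+1}\sum_{j\in\{i\}\cup N_i^*(t)}w_j-\alpha(t-1)d_i(t-1)$, $d_i(t-1)$ a subgradient of $g_i$ at $x_i(t-1)$. Known facts: with $\mathbf{x}(t)$ the non-faulty states and $\mathbf{d}(t)=(d_1(t),\dots,d_{n-\phi}(t))$, $\mathbf{x}(t+1)=\mathbf{M}(t)\mathbf{x}(t)-\alpha(t)\mathbf{d}(t)$ with row-stochastic $\mathbf{M}(t)$, and there is $0<\beta<1$ with $\mathbf{M}(t)\ge\beta\mathbf{H}(t)$ entrywise for the adjacency matrix $\mathbf{H}(t)$ (including diagonal ones) of some reduced graph in $R_{\mathcal{F}}$. Let $\Phi(t,r)=\mathbf{M}(t)\cdots\mathbf{M}(r)$ for $t\ge r$, $\Phi(t,t+1)=I$, $\nu=\tau(n-\phi)$, $\gamma=1-\beta^\nu$. Under Condition 1, for each $r$, $\lim_{t\to\infty}\Phi(t,r)=\mathbf{1}\pi(r)$ for a stochastic row vector $\pi(r)=(\pi_1(r),\dots,\pi_{n-\phi}(r))$,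 and $|\Phi_{ij}(t,r)-\pi_j(r)|\le\gamma^{\lceil (t-r+1)/\nu\rceil}$ for all $t\ge r$. Define $y(t)=\sum_{j=1}^{n-\phi}\pi_j(0)x_j(0)-\sum_{r=1}^{t}\alpha(r-1)\sum_{j=1}^{n-\phi}\pi_j(r)d_j(r-1)$. *)

theory Defs
  imports "HOL-Analysis.Analysis"
begin

text \<open>Square matrices on the index set {0..<m} are functions nat => nat => real.\<close>

definition idmat :: "nat \<Rightarrow> nat \<Rightarrow> real" where
  "idmat i j = (if i = j then 1 else 0)"

definition matmul :: "nat \<Rightarrow> (nat \<Rightarrow> nat \<Rightarrow> real) \<Rightarrow> (nat \<Rightarrow> nat \<Rightarrow> real) \<Rightarrow> nat \<Rightarrow> nat \<Rightarrow> real" where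
  "matmul m P Q i j = (\<Sum>k<m. P i k * Q k j)"

fun prodM :: "nat \<Rightarrow> (nat \<Rightarrow> nat \<Rightarrow> nat \<Rightarrow> real) \<Rightarrow> nat \<Rightarrow> nat \<Rightarrow> nat \<Rightarrow> nat \<Rightarrow> real" where
  "prodM m M r 0 = idmat"
| "prodM m M r (Suc l) = matmul m (M (r + l)) (prodM m M r l)"

text \<open>Phi(t,r) = M(t) ... M(r) for t >= r, and Phi(t,t+1) = I.\<close>
definition Phi :: "nat \<Rightarrow> (nat \<Rightarrow> nat \<Rightarrow> nat \<Rightarrow> real) \<Rightarrow> nat \<Rightarrow> nat \<Rightarrow> nat \<Rightarrow> nat \<Rightarrow> real" where
  "Phi m M t r = prodM m M r (t + 1 - r)"

definition row_stochastic :: "nat \<Rightarrow> (nat \<Rightarrow> nat \<Rightarrow> real) \<Rightarrow> bool" where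
  "row_stochastic m P \<longleftrightarrow> (\<forall>i<m. (\<forall>j<m. 0 \<le> P i j) \<and> (\<Sum>j<m. P i j) = 1)"

definition stochastic_vec :: "nat \<Rightarrow> (nat \<Rightarrow> real) \<Rightarrow> bool" where
  "stochastic_vec m p \<longleftrightarrow> (\<forall>j<m. 0 \<le> p j) \<and> (\<Sum>j<m. p j) = 1"

definition admissible :: "real \<Rightarrow> (real \<Rightarrow> real) \<Rightarrow> bool" where
  "admissible L h \<longleftrightarrow> convex_on UNIV h \<and> L-lipschitz_on UNIV h \<and>
     {z. \<forall>w. h z \<le> h w} \<noteq> {} \<and> compact {z. \<forall>w. h z \<le> h w}"

definition subgradient :: "(real \<Rightarrow> real) \<Rightarrow> real \<Rightarrow> real \<Rightarrow> bool" where
  "subgradient g x0 d \<longleftrightarrow> (\<forall>z. g x0 + d * (z - x0) \<le> g z)"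

end

theory Submission
  imports Defs
begin

lemma matmul_app:
  "(\<Sum>j<m. P i j * (\<Sum>l<m. Q j l * v l)) = (\<Sum>l<m. matmul m P Q i l * v l)"
proof -
  have "(\<Sum>j<m. P i j * (\<Sum>l<m. Q j l * v l)) = (\<Sum>j<m. \<Sum>l<m. P i j * (Q j l * v l))"
    by (simp add: sum_distrib_left)
  also have "\<dots> = (\<Sum>l<m. \<Sum>j<m. P i j * (Q j l * v l))" by (rule sum.swap)
  also have "\<dots> = (\<Sum>l<m. matmul m P Q i l * v l)"
    by (simp add: matmul_def sum_distrib_right mult.assoc)
  finally show ?thesis .
qed

lemma idmat_app: "i < m \<Longrightarrow> (\<Sum>j<m. idmat i j * v j) = v i"
  unfolding idmat_def by (subst sum.remove[of _ i]) auto

lemma closed_form: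
  fixes x d :: "nat \<Rightarrow> nat \<Rightarrow> real"
  assumes dyn: "\<forall>t. \<forall>i<m. x (Suc t) i = (\<Sum>j<m. M t i j * x t j) - \<alpha> t * d t i"
  shows "\<forall>i<m. x t i = (\<Sum>j<m. prodM m M 0 t i j * x 0 j)
     - (\<Sum>r\<in>{1..t}. \<alpha> (r-1) * (\<Sum>j<m. prodM m M r (t-r) i j * d (r-1) j))"
proof (induction t)
  case 0
  then show ?case by (simp add: idmat_app)
next
  case (Suc t)
  show ?case
  proof (intro allI impI)
    fix i assume i: "i < m"
    define F where "F r = \<alpha> (r-1) * (\<Sum>j<m. prodM m M r (Suc t - r) i j * d (r-1) j)" for r
    define B where "B r j = (\<Sum>l<m. prodM m M r (t-r) j l * d (r-1) l)" for r j
    have "x (Suc t) i = (\<Sum>j<m. M t i j * ((\<Sum>l<m. prodM m M 0 t j l * x 0 l)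
        - (\<Sum>r\<in>{1..t}. \<alpha> (r-1) * B r j))) - \<alpha> t * d t i"
      using dyn i Suc.IH by (simp add: B_def)
    also have "\<dots> = (\<Sum>j<m. M t i j * (\<Sum>l<m. prodM m M 0 t j l * x 0 l))
        - (\<Sum>r\<in>{1..t}. \<alpha> (r-1) * (\<Sum>j<m. M t i j * B r j)) - \<alpha> t * d t i"
    proof -
      have s: "(\<Sum>j<m. M t i j * (\<Sum>r\<in>{1..t}. \<alpha> (r-1) * B r j)) = (\<Sum>r\<in>{1..t}. \<alpha> (r-1) * (\<Sum>j<m. M t i j * B r j))"
      proof -
        have "(\<Sum>j<m. M t i j * (\<Sum>r\<in>{1..t}. \<alpha> (r-1) * B r j)) = (\<Sum>j<m. \<Sum>r\<in>{1..t}. \<alpha> (r-1) * (M t i j * B r j))"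
          by (simp add: sum_distrib_left mult.left_commute)
        also have "\<dots> = (\<Sum>r\<in>{1..t}. \<Sum>j<m. \<alpha> (r-1) * (M t i j * B r j))" by (rule sum.swap)
        also have "\<dots> = (\<Sum>r\<in>{1..t}. \<alpha> (r-1) * (\<Sum>j<m. M t i j * B r j))" by (simp add: sum_distrib_left)
        finally show ?thesis .
      qed
      show ?thesis by (simp only: right_diff_distrib sum_subtractf s)
    qed
    also have "(\<Sum>j<m. M t i j * (\<Sum>l<m. prodM m M 0 t j l * x 0 l)) = (\<Sum>l<m. prodM m M 0 (Suc t) i l * x 0 l)"
      by (simp add: matmul_app)
    also have "(\<Sum>r\<in>{1..t}. \<alpha> (r-1) * (\<Sum>j<m. M t i j * B r j))
       = (\<Sum>r\<in>{1..t}. \<alpha> (r-1) * (\<Sum>j<m. prodM m M r (Suc t - r) i j * d (r-1) j))"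
    proof (rule sum.cong[OF refl])
      fix r assume r: "r \<in> {1..t}"
      have e: "Suc t - r = Suc (t - r)" "r + (t - r) = t" using r by auto
      show "\<alpha> (r-1) * (\<Sum>j<m. M t i j * B r j) = \<alpha> (r-1) * (\<Sum>j<m. prodM m M r (Suc t - r) i j * d (r-1) j)"
        by (simp only: B_def matmul_app e(1) prodM.simps e(2))
    qed
    also have "\<alpha> t * d t i = F (Suc t)"
      using i by (simp add: idmat_app F_def)
    finally have c: "x (Suc t) i = (\<Sum>j<m. prodM m M 0 (Suc t) i j * x 0 j) - (\<Sum>r\<in>{1..t}. F r) - F (Suc t)"
      by (simp only: F_def)
    have sp: "(\<Sum>r\<in>{1..Suc t}. F r) = (\<Sum>r\<in>{1..t}. F r) + F (Suc t)" by simp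
    show "x (Suc t) i = (\<Sum>j<m. prodM m M 0 (Suc t) i j * x 0 j)
     - (\<Sum>r\<in>{1..Suc t}. \<alpha> (r-1) * (\<Sum>j<m. prodM m M r (Suc t-r) i j * d (r-1) j))"
    proof -
      have eq: "(\<Sum>r\<in>{1..Suc t}. \<alpha> (r-1) * (\<Sum>j<m. prodM m M r (Suc t-r) i j * d (r-1) j)) = (\<Sum>r\<in>{1..Suc t}. F r)"
        by (simp only: F_def)
      show ?thesis unfolding eq sp c by (simp only: diff_diff_eq)
    qed
  qed
qed

lemma ceil_pow_bound:
  fixes \<gamma> :: real and l \<nu> :: nat
  assumes g: "0 < \<gamma>" "\<gamma> < 1" and nu: "0 < \<nu>"
  shows "\<gamma> ^ nat \<lceil>real l / real \<nu>\<rceil> \<le> (\<gamma> powr (1 / real \<nu>)) ^ l"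
proof -
  define c where "c = \<lceil>real l / real \<nu>\<rceil>"
  have q0: "0 \<le> real l / real \<nu>" by simp
  have c0: "0 \<le> c" unfolding c_def zero_le_ceiling using q0 by linarith
  have q: "real l / real \<nu> \<le> real (nat c)"
    using c0 unfolding c_def by (simp add: le_of_int_ceiling)
  have "\<gamma> ^ nat c = \<gamma> powr real (nat c)" using g by (simp add: powr_realpow)
  also have "\<dots> \<le> \<gamma> powr (real l / real \<nu>)" by (rule powr_mono'[OF q]) (use g in auto)
  also have "\<dots> = (\<gamma> powr (1 / real \<nu>)) powr real l" by (simp add: powr_powr)
  also have "\<dots> = (\<gamma> powr (1 / real \<nu>)) ^ l" using g by (simp add: powr_realpow)
  finally show ?thesis unfolding c_def .
qed

lemma subgrad_bound:
  fixes A :: "nat \<Rightarrow> nat \<Rightarrow> real" and h :: "nat \<Rightarrow> real \<Rightarrow> real"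
  assumes A_nonneg: "\<forall>j<k. 0 \<le> A j i" and A_col: "(\<Sum>j<k. A j i) = 1"
    and lip: "\<forall>j<k. L-lipschitz_on UNIV (h j)"
    and sg: "subgradient (\<lambda>z. \<Sum>j<k. A j i * h j z) x0 d0"
  shows "\<bar>d0\<bar> \<le> L"
proof -
  define g where "g z = (\<Sum>j<k. A j i * h j z)" for z
  have lipg: "g z - g w \<le> L * \<bar>z - w\<bar>" for z w
  proof -
    have "g z - g w = (\<Sum>j<k. A j i * (h j z - h j w))"
      unfolding g_def by (simp add: right_diff_distrib sum_subtractf)
    also have "\<dots> \<le> (\<Sum>j<k. A j i * (L * \<bar>z - w\<bar>))"
    proof (rule sum_mono)
      fix j assume j: "j \<in> {..<k}"
      have "dist (h j z) (h j w) \<le> L * dist z w" using lip j by (auto intro: lipschitz_onD)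
      hence "h j z - h j w \<le> L * \<bar>z - w\<bar>" by (simp add: dist_real_def)
      thus "A j i * (h j z - h j w) \<le> A j i * (L * \<bar>z - w\<bar>)"
        using A_nonneg j by (simp add: mult_left_mono)
    qed
    also have "\<dots> = L * \<bar>z - w\<bar>" using A_col by (simp add: sum_distrib_right[symmetric])
    finally show ?thesis .
  qed
  have s: "g x0 + d0 * (z - x0) \<le> g z" for z using sg unfolding subgradient_def g_def by blast
  have "d0 \<le> L" using s[of "x0 + 1"] lipg[of "x0 + 1" x0] by simp
  moreover have "- d0 \<le> L" using s[of "x0 - 1"] lipg[of "x0 - 1" x0] by simp
  ultimately show ?thesis by simp
qed

theorem lemma8:
  fixes n k m :: nat
    and L \<beta> :: real and \<tau> :: nat
    and A :: "nat \<Rightarrow> nat \<Rightarrow> real"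
    and h :: "nat \<Rightarrow> real \<Rightarrow> real"
    and \<alpha> :: "nat \<Rightarrow> real"
    and M :: "nat \<Rightarrow> nat \<Rightarrow> nat \<Rightarrow> real"
    and x d :: "nat \<Rightarrow> nat \<Rightarrow> real"
    and \<pi> :: "nat \<Rightarrow> nat \<Rightarrow> real"
    and y :: "nat \<Rightarrow> real"
  assumes m_le: "m \<le> n"
    and A_nonneg: "\<forall>j<k. \<forall>i<n. 0 \<le> A j i"
    and A_cols: "\<forall>i<n. (\<Sum>j<k. A j i) = 1"
    and h_adm: "\<forall>j<k. admissible L (h j)"
    and alpha_nonneg: "\<forall>t. 0 \<le> \<alpha> t"
    and alpha_antimono: "\<forall>t. \<alpha> (Suc t) \<le> \<alpha> t"
    and alpha_div: "\<not> summable \<alpha>"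
    and alpha_sq: "summable (\<lambda>t. (\<alpha> t)\<^sup>2)"
    and subgrad: "\<forall>t. \<forall>i<m. subgradient (\<lambda>z. \<Sum>j<k. A j i * h j z) (x t i) (d t i)"
    and M_stoch: "\<forall>t. row_stochastic m (M t)"
    and dyn: "\<forall>t. \<forall>i<m. x (Suc t) i = (\<Sum>j<m. M t i j * x t j) - \<alpha> t * d t i"
    and beta: "0 < \<beta>" "\<beta> < 1"
    and tau: "1 \<le> \<tau>"
    and pi_stoch: "\<forall>r. stochastic_vec m (\<pi> r)"
    and Phi_lim: "\<forall>r. \<forall>i<m. \<forall>j<m. (\<lambda>t. Phi m M t r i j) \<longlonglongrightarrow> \<pi> r j"
    and Phi_rate: "\<forall>r t. r \<le> t \<longrightarrow> (\<forall>i<m. \<forall>j<m.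
         \<bar>Phi m M t r i j - \<pi> r j\<bar> \<le>
           (1 - \<beta> ^ (\<tau> * m)) ^ nat \<lceil>real (t - r + 1) / real (\<tau> * m)\<rceil>)"
    and y_def: "\<forall>t. y t = (\<Sum>j<m. \<pi> 0 j * x 0 j)
                 - (\<Sum>r\<in>{1..t}. \<alpha> (r - 1) * (\<Sum>j<m. \<pi> r j * d (r - 1) j))"
  shows "summable (\<lambda>t. \<alpha> t * (\<Sum>j<m. \<pi> (Suc t) j * \<bar>y t - x t j\<bar>))"
proof (cases "m = 0")
  case True
  thus ?thesis by simp
next
  case False
  hence m0: "0 < m" by simp
  have n0: "0 < n" using m_le m0 by linarith
  have k0: "0 < k"
  proof (rule ccontr)
    assume "\<not> 0 < k"
    hence "k = 0" by simp
    with A_cols n0 show False by auto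
  qed
  have L0: "0 \<le> L" using h_adm k0 unfolding admissible_def by (auto intro: lipschitz_on_nonneg)
  have dbd: "\<bar>d t i\<bar> \<le> L" if "i < m" for t i
  proof (rule subgrad_bound)
    show "\<forall>j<k. 0 \<le> A j i" using A_nonneg that m_le by auto
    show "(\<Sum>j<k. A j i) = 1" using A_cols that m_le by auto
    show "\<forall>j<k. L-lipschitz_on UNIV (h j)" using h_adm by (auto simp: admissible_def)
    show "subgradient (\<lambda>z. \<Sum>j<k. A j i * h j z) (x t i) (d t i)" using subgrad that by auto
  qed
  define \<nu> where "\<nu> = \<tau> * m"
  have nu0: "0 < \<nu>" using tau m0 by (simp add: \<nu>_def)
  define \<gamma> where "\<gamma> = 1 - \<beta> ^ \<nu>"
  have bp: "0 < \<beta> ^ \<nu>" "\<beta> ^ \<nu> < 1" using beta nu0 by (auto simp: power_less_one_iff)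
  have g: "0 < \<gamma>" "\<gamma> < 1" using bp by (auto simp: \<gamma>_def)
  define \<rho> where "\<rho> = \<gamma> powr (1 / real \<nu>)"
  have rho0: "0 < \<rho>" using g by (simp add: \<rho>_def)
  have rho1: "\<rho> < 1"
  proof -
    have e: "\<rho> = exp ((1 / real \<nu>) * ln \<gamma>)" using g by (simp add: \<rho>_def powr_def)
    have "ln \<gamma> < 0" using g by simp
    moreover have "0 < 1 / real \<nu>" using nu0 by simp
    ultimately have "(1 / real \<nu>) * ln \<gamma> < 0" by (rule mult_pos_neg[rotated])
    thus ?thesis unfolding e by simp
  qed
  have pibd: "\<bar>\<pi> r j - prodM m M r l i j\<bar> \<le> \<rho> ^ l" if ij: "i < m" "j < m" for r l i j
  proof (cases l)
    case 0
    have pj0: "0 \<le> \<pi> r j" using pi_stoch ij by (auto simp: stochastic_vec_def)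
    have "\<pi> r j \<le> (\<Sum>j<m. \<pi> r j)"
      by (rule member_le_sum) (use pi_stoch ij in \<open>auto simp: stochastic_vec_def\<close>)
    hence pj1: "\<pi> r j \<le> 1" using pi_stoch by (simp add: stochastic_vec_def)
    show ?thesis using 0 pj0 pj1 by (auto simp: idmat_def)
  next
    case (Suc l')
    have pr: "\<bar>Phi m M (r + l') r i j - \<pi> r j\<bar> \<le>
           (1 - \<beta> ^ (\<tau> * m)) ^ nat \<lceil>real (r + l' - r + 1) / real (\<tau> * m)\<rceil>"
      by (rule Phi_rate[rule_format, OF _ ij]) simp
    have "\<bar>prodM m M r l i j - \<pi> r j\<bar> \<le> \<gamma> ^ nat \<lceil>real l / real \<nu>\<rceil>"
      using pr Suc by (simp add: Phi_def \<gamma>_def \<nu>_def)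
    also have "\<dots> \<le> \<rho> ^ l" unfolding \<rho>_def by (rule ceil_pow_bound[OF g nu0])
    finally show ?thesis by (simp add: abs_minus_commute)
  qed
  define S0 where "S0 = (\<Sum>i<m. \<bar>x 0 i\<bar>)"
  have ebd: "\<bar>y t - x t j\<bar> \<le> \<rho> ^ t * S0 + (\<Sum>r\<in>{1..t}. \<alpha> (r-1) * (real m * L * \<rho> ^ (t - r)))"
    if j: "j < m" for t j
  proof -
    define P0 where "P0 = prodM m M 0 t"
    define Pr where "Pr r = prodM m M r (t - r)" for r
    have cf: "x t j = (\<Sum>i<m. P0 j i * x 0 i) - (\<Sum>r\<in>{1..t}. \<alpha> (r-1) * (\<Sum>i<m. Pr r j i * d (r-1) i))"
      using closed_form[OF dyn, where t=t] j unfolding P0_def Pr_def by blast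
    have eq: "y t - x t j = (\<Sum>i<m. (\<pi> 0 i - P0 j i) * x 0 i)
        - (\<Sum>r\<in>{1..t}. \<alpha> (r-1) * (\<Sum>i<m. (\<pi> r i - Pr r j i) * d (r-1) i))"
      unfolding cf y_def[rule_format]
      by (simp add: left_diff_distrib right_diff_distrib sum_subtractf)
    have b1: "\<bar>\<Sum>i<m. (\<pi> 0 i - P0 j i) * x 0 i\<bar> \<le> \<rho> ^ t * S0"
    proof -
      have "\<bar>\<Sum>i<m. (\<pi> 0 i - P0 j i) * x 0 i\<bar> \<le> (\<Sum>i<m. \<bar>(\<pi> 0 i - P0 j i) * x 0 i\<bar>)"
        by (rule sum_abs)
      also have "\<dots> \<le> (\<Sum>i<m. \<rho> ^ t * \<bar>x 0 i\<bar>)"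
      proof (rule sum_mono)
        fix i assume i: "i \<in> {..<m}"
        have "\<bar>\<pi> 0 i - P0 j i\<bar> \<le> \<rho> ^ t" unfolding P0_def using pibd[of j i 0 t] i j by simp
        thus "\<bar>(\<pi> 0 i - P0 j i) * x 0 i\<bar> \<le> \<rho> ^ t * \<bar>x 0 i\<bar>"
          by (simp add: abs_mult mult_right_mono)
      qed
      also have "\<dots> = \<rho> ^ t * S0" by (simp add: S0_def sum_distrib_left)
      finally show ?thesis .
    qed
    have b2: "\<bar>\<Sum>r\<in>{1..t}. \<alpha> (r-1) * (\<Sum>i<m. (\<pi> r i - Pr r j i) * d (r-1) i)\<bar>
        \<le> (\<Sum>r\<in>{1..t}. \<alpha> (r-1) * (real m * L * \<rho> ^ (t - r)))"
    proof -
      have "\<bar>\<Sum>r\<in>{1..t}. \<alpha> (r-1) * (\<Sum>i<m. (\<pi> r i - Pr r j i) * d (r-1) i)\<bar>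
          \<le> (\<Sum>r\<in>{1..t}. \<bar>\<alpha> (r-1) * (\<Sum>i<m. (\<pi> r i - Pr r j i) * d (r-1) i)\<bar>)"
        by (rule sum_abs)
      also have "\<dots> \<le> (\<Sum>r\<in>{1..t}. \<alpha> (r-1) * (real m * L * \<rho> ^ (t - r)))"
      proof (rule sum_mono)
        fix r assume r: "r \<in> {1..t}"
        have "\<bar>\<Sum>i<m. (\<pi> r i - Pr r j i) * d (r-1) i\<bar> \<le> (\<Sum>i<m. \<bar>(\<pi> r i - Pr r j i) * d (r-1) i\<bar>)"
          by (rule sum_abs)
        also have "\<dots> \<le> (\<Sum>i<m. \<rho> ^ (t - r) * L)"
        proof (rule sum_mono)
          fix i assume i: "i \<in> {..<m}"
          have a: "\<bar>\<pi> r i - Pr r j i\<bar> \<le> \<rho> ^ (t - r)" unfolding Pr_def using pibd[of j i r "t - r"] i j by simp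
          have b: "\<bar>d (r-1) i\<bar> \<le> L" using dbd i by simp
          show "\<bar>(\<pi> r i - Pr r j i) * d (r-1) i\<bar> \<le> \<rho> ^ (t - r) * L"
            unfolding abs_mult by (rule mult_mono[OF a b]) (use rho0 in auto)
        qed
        also have "\<dots> = real m * L * \<rho> ^ (t - r)" by simp
        finally have c: "\<bar>\<Sum>i<m. (\<pi> r i - Pr r j i) * d (r-1) i\<bar> \<le> real m * L * \<rho> ^ (t - r)" .
        show "\<bar>\<alpha> (r-1) * (\<Sum>i<m. (\<pi> r i - Pr r j i) * d (r-1) i)\<bar> \<le> \<alpha> (r-1) * (real m * L * \<rho> ^ (t - r))"
          unfolding abs_mult using c alpha_nonneg by (simp add: mult_left_mono)
      qed
      finally show ?thesis .
    qed
    show ?thesis unfolding eq using b1 b2 abs_triangle_ineq4 by (smt (verit))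
  qed
  have amono: "\<alpha> t \<le> \<alpha> s" if "s \<le> t" for s t
    using lift_Suc_antimono_le[of \<alpha>, OF _ that] alpha_antimono by auto
  define D where "D t = (\<Sum>r\<in>{1..t}. (\<alpha> (r-1))\<^sup>2 * \<rho> ^ (t - r))" for t
  have fbd: "norm (\<alpha> t * (\<Sum>j<m. \<pi> (Suc t) j * \<bar>y t - x t j\<bar>)) \<le> \<alpha> 0 * S0 * \<rho> ^ t + real m * L * D t" for t
  proof -
    define E where "E = \<rho> ^ t * S0 + (\<Sum>r\<in>{1..t}. \<alpha> (r-1) * (real m * L * \<rho> ^ (t - r)))"
    have pin: "0 \<le> \<pi> (Suc t) j" if "j < m" for j using pi_stoch that by (simp add: stochastic_vec_def)
    have ps: "(\<Sum>j<m. \<pi> (Suc t) j) = 1" using pi_stoch by (simp add: stochastic_vec_def)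
    have s0: "0 \<le> (\<Sum>j<m. \<pi> (Suc t) j * \<bar>y t - x t j\<bar>)" using pin by (auto intro: sum_nonneg)
    have "(\<Sum>j<m. \<pi> (Suc t) j * \<bar>y t - x t j\<bar>) \<le> (\<Sum>j<m. \<pi> (Suc t) j * E)"
      by (rule sum_mono) (use pin ebd in \<open>auto simp: E_def intro: mult_left_mono\<close>)
    also have "\<dots> = E" using ps by (simp add: sum_distrib_right[symmetric])
    finally have sE: "(\<Sum>j<m. \<pi> (Suc t) j * \<bar>y t - x t j\<bar>) \<le> E" .
    have "norm (\<alpha> t * (\<Sum>j<m. \<pi> (Suc t) j * \<bar>y t - x t j\<bar>)) = \<alpha> t * (\<Sum>j<m. \<pi> (Suc t) j * \<bar>y t - x t j\<bar>)"
      using s0 alpha_nonneg by simp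
    also have "\<dots> \<le> \<alpha> t * E" using sE alpha_nonneg by (simp add: mult_left_mono)
    also have "\<dots> = \<alpha> t * S0 * \<rho> ^ t + real m * L * (\<Sum>r\<in>{1..t}. \<alpha> t * \<alpha> (r-1) * \<rho> ^ (t - r))"
      by (simp add: E_def algebra_simps sum_distrib_left)
    also have "\<dots> \<le> \<alpha> 0 * S0 * \<rho> ^ t + real m * L * D t"
    proof (rule add_mono)
      have "0 \<le> S0" by (simp add: S0_def sum_nonneg)
      thus "\<alpha> t * S0 * \<rho> ^ t \<le> \<alpha> 0 * S0 * \<rho> ^ t"
        using amono[of 0 t] rho0 by (simp add: mult_right_mono)
      have "(\<Sum>r\<in>{1..t}. \<alpha> t * \<alpha> (r-1) * \<rho> ^ (t - r)) \<le> D t"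
        unfolding D_def
      proof (rule sum_mono)
        fix r assume r: "r \<in> {1..t}"
        have "\<alpha> t \<le> \<alpha> (r - 1)" using r by (intro amono) auto
        hence "\<alpha> t * \<alpha> (r-1) \<le> (\<alpha> (r-1))\<^sup>2"
          using alpha_nonneg by (simp add: power2_eq_square mult_right_mono)
        thus "\<alpha> t * \<alpha> (r-1) * \<rho> ^ (t - r) \<le> (\<alpha> (r-1))\<^sup>2 * \<rho> ^ (t - r)"
          using rho0 by (simp add: mult_right_mono)
      qed
      thus "real m * L * (\<Sum>r\<in>{1..t}. \<alpha> t * \<alpha> (r-1) * \<rho> ^ (t - r)) \<le> real m * L * D t"
        using L0 by (simp add: mult_left_mono)
    qed
    finally show ?thesis .
  qed
  have geo: "summable (\<lambda>t. \<rho> ^ t)" using rho0 rho1 by (simp add: summable_geometric)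
  have sumD: "summable D"
  proof -
    have DS: "D (Suc u) = (\<Sum>s\<le>u. (\<alpha> s)\<^sup>2 * \<rho> ^ (u - s))" for u
    proof -
      have "D (Suc u) = (\<Sum>r\<in>{Suc 0..Suc u}. (\<alpha> (r-1))\<^sup>2 * \<rho> ^ (Suc u - r))" by (simp add: D_def)
      also have "\<dots> = (\<Sum>s\<in>{0..u}. (\<alpha> s)\<^sup>2 * \<rho> ^ (u - s))"
        by (subst sum.shift_bounds_cl_Suc_ivl) simp
      also have "\<dots> = (\<Sum>s\<le>u. (\<alpha> s)\<^sup>2 * \<rho> ^ (u - s))" by (simp add: atLeast0AtMost)
      finally show ?thesis .
    qed
    have "summable (\<lambda>u. \<Sum>s\<le>u. (\<alpha> s)\<^sup>2 * \<rho> ^ (u - s))"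
      by (rule summable_Cauchy_product) (use alpha_sq geo rho0 in auto)
    hence "summable (\<lambda>u. D (Suc u))" by (simp add: DS)
    thus ?thesis by (simp add: summable_Suc_iff)
  qed
  have "summable (\<lambda>t. \<alpha> 0 * S0 * \<rho> ^ t + real m * L * D t)"
    by (intro summable_add summable_mult geo sumD)
  thus ?thesis by (rule summable_comparison_test'[where N=0]) (rule fbd)
qed

end
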